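(* Let $g(x)$ and $a(x)$ be coprime real univariate polynomials with $\deg(g)=m$. If $a(x)>0$ for all $x\in\{x\in\mathbb{R}\mid g(x)=0\}$, then there exists a polynomial $t\in\mathbb{R}[x]_m$ such that $a\equiv t^2\pmod g$.
   Context: $\mathbb{R}[x]_m$ is the space of real univariate polynomials of degree at most $m$. For univariate polynomials, $a\equiv b\pmod g$ means $a=b+wg$ for some $w\in\mathbb{R}[x]$. Coprime means the greatest common divisor is a constant. *)

theory Defs
  imports "HOL-Computational_Algebra.Computational_Algebra"
begin

end

theory Submission imports Defs "HOL-Computational_Algebra.Field_as_Ring" begin

definition E :: "complex \<Rightarrow> real poly \<Rightarrow> complex" where
  "E z p = poly (map_poly of_real p) z"

lemma map_of_real_mult: "map_poly (of_real :: real \<Rightarrow> complex) (p * q) = map_poly of_real p * map_poly of_real q"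
  by (simp add: poly_eq_iff coeff_mult coeff_map_poly)

lemma map_of_real_add: "map_poly (of_real :: real \<Rightarrow> complex) (p + q) = map_poly of_real p + map_poly of_real q"
  by (simp add: poly_eq_iff coeff_map_poly)

lemma map_of_real_diff: "map_poly (of_real :: real \<Rightarrow> complex) (p - q) = map_poly of_real p - map_poly of_real q"
  by (simp add: poly_eq_iff coeff_map_poly)

lemma E_mult: "E z (p * q) = E z p * E z q"
  by (simp add: E_def map_of_real_mult)
lemma E_add: "E z (p + q) = E z p + E z q"
  by (simp add: E_def map_of_real_add)
lemma E_diff: "E z (p - q) = E z p - E z q"
  by (simp add: E_def map_of_real_diff)
lemma E_one: "E z 1 = 1"
  by (simp add: E_def)
lemma E_pow: "E z (p ^ n) = E z p ^ n"
  by (induction n) (simp_all add: E_one E_mult)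
lemma E_real: "E (of_real x) p = of_real (poly p x)"
  unfolding E_def by (induction p) (auto simp: map_poly_pCons)
lemma E_lin: "E z [:c, d:] = of_real c + of_real d * z"
  by (simp add: E_def map_poly_pCons)

lemma bezout1:
  fixes a b :: "real poly"
  assumes "coprime a b"
  obtains u v where "u * a + v * b = 1"
  using bezout_coefficients_fst_snd[of a b] assms
  by (metis coprime_iff_gcd_eq_1)

lemma prime_dvd_from_root:
  fixes q f :: "real poly"
  assumes "prime q" "E z q = 0" "E z f = 0"
  shows "q dvd f"
proof (rule ccontr)
  assume "\<not> q dvd f"
  then have "coprime q f" using assms(1) prime_imp_coprime by blast
  then obtain u v where "u * q + v * f = 1" by (rule bezout1)
  then have "E z (u * q + v * f) = 1" by (simp add: E_one)
  then show False using assms by (simp add: E_add E_mult)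
qed

lemma coprime_root:
  fixes q a t :: "real poly"
  assumes "coprime q a" "q dvd a - t^2"
  shows "coprime t q"
proof (rule coprimeI)
  fix d assume d: "d dvd t" "d dvd q"
  then have "d dvd t^2" by (simp add: power2_eq_square)
  moreover have "d dvd a - t^2" using d assms(2) dvd_trans by blast
  ultimately have "d dvd a" by (metis dvd_add diff_add_cancel)
  then show "is_unit d" using d(2) assms(1) coprime_common_divisor by blast
qed

lemma hensel:
  fixes q a t0 :: "real poly"
  assumes "coprime q a" "q dvd a - t0^2"
  shows "\<exists>t. q ^ Suc n dvd a - t^2"
proof (induction n)
  case 0 then show ?case using assms by auto
next
  case (Suc n)
  then obtain t c where tc: "a - t^2 = q ^ Suc n * c" by (auto elim: dvdE)
  have "q dvd a - t^2" using tc by simp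
  then have "coprime t q" using coprime_root assms(1) by blast
  then obtain u v where uv: "u * t + v * q = 1" by (rule bezout1)
  define s where "s = smult (1/2) (c * u)"
  have s2: "2 * t * s = c * u * t"
    unfolding s_def by (simp add: algebra_simps numeral_poly smult_smult flip: smult_add_left)
  define t' where "t' = t + s * q ^ Suc n"
  have "a - t'^2 = q ^ Suc (Suc n) * (c * v - s^2 * q ^ n)"
  proof -
    have "a - t'^2 = q ^ Suc n * c * (u * t + v * q) - 2 * t * s * q ^ Suc n - s^2 * q ^ Suc n * q ^ Suc n"
      using tc uv unfolding t'_def by (simp add: algebra_simps power2_eq_square)
    also have "\<dots> = q ^ Suc (Suc n) * (c * v - s^2 * q ^ n)"
      unfolding s2 by (simp add: algebra_simps power2_eq_square)
    finally show ?thesis .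
  qed
  then have "q ^ Suc (Suc n) dvd a - t'^2" by (metis dvd_triv_left)
  then show ?case by blast
qed


lemma base_sqrt:
  fixes q g a :: "real poly"
  assumes "prime q" "q dvd g" "\<forall>x::real. poly g x = 0 \<longrightarrow> poly a x > 0"
  shows "\<exists>t. q dvd a - t^2"
proof -
  have "q \<noteq> 0" "\<not> is_unit q" using assms(1) by auto
  then have dq: "degree q > 0" using is_unit_iff_degree by blast
  have "degree (map_poly complex_of_real q) = degree q" by (rule degree_map_poly) simp
  with dq have "\<not> constant (poly (map_poly complex_of_real q))" by (simp add: constant_degree)
  then obtain z where "poly (map_poly complex_of_real q) z = 0"
    using fundamental_theorem_of_algebra by blast
  then have zq: "E z q = 0" by (simp add: E_def)
  from assms(2) obtain k where "g = q * k" by (auto elim: dvdE)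
  then have zg: "E z g = 0" using zq by (simp add: E_mult)
  show ?thesis
  proof (cases "Im z = 0")
    case True
    define r where "r = Re z"
    have zr: "z = of_real r" using True unfolding r_def by (simp add: complex_eq_iff)
    have "poly g r = 0" using zg zr E_real by simp
    then have pos: "poly a r > 0" using assms(3) by blast
    define t where "t = [:sqrt (poly a r):]"
    have "poly (a - t^2) r = 0" using pos unfolding t_def by simp
    then have "E z (a - t^2) = 0" using zr E_real by simp
    then have "q dvd a - t^2" using prime_dvd_from_root assms(1) zq by blast
    then show ?thesis by blast
  next
    case False
    define s where "s = csqrt (E z a)"
    define d where "d = Im s / Im z"
    define c where "c = Re s - d * Re z"
    define t where "t = [:c, d:]"
    have "E z t = s" unfolding t_def E_lin c_def d_def using False
      by (simp add: complex_eq_iff field_simps)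
    then have "E z (a - t^2) = 0" unfolding s_def by (simp add: E_diff E_pow)
    then have "q dvd a - t^2" using prime_dvd_from_root assms(1) zq by blast
    then show ?thesis by blast
  qed
qed

lemma crt_sqrt:
  fixes A B a t1 t2 :: "real poly"
  assumes "coprime A B" "A dvd a - t1^2" "B dvd a - t2^2"
  shows "\<exists>t. A * B dvd a - t^2"
proof -
  obtain u v where uv: "u * A + v * B = 1" using assms(1) by (rule bezout1)
  define t where "t = t1 * v * B + t2 * u * A"
  have vB: "v * B = 1 - u * A" using uv by (simp add: algebra_simps)
  have uA: "u * A = 1 - v * B" using uv by (simp add: algebra_simps)
  have e1: "t - t1 = A * (u * (t2 - t1))"
  proof -
    have "t - t1 = t1 * (v * B) + t2 * (u * A) - t1" unfolding t_def by (simp add: algebra_simps)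
    also have "\<dots> = A * (u * (t2 - t1))" unfolding vB by (simp add: algebra_simps)
    finally show ?thesis .
  qed
  have e2: "t - t2 = B * (v * (t1 - t2))"
  proof -
    have "t - t2 = t1 * (v * B) + t2 * (u * A) - t2" unfolding t_def by (simp add: algebra_simps)
    also have "\<dots> = B * (v * (t1 - t2))" unfolding uA by (simp add: algebra_simps)
    finally show ?thesis .
  qed
  have "a - t^2 = (a - t1^2) - (t - t1) * (t + t1)" by (simp add: algebra_simps power2_eq_square)
  then have dA: "A dvd a - t^2" using assms(2) e1 by (metis dvd_diff dvd_mult2 dvd_triv_left)
  have "a - t^2 = (a - t2^2) - (t - t2) * (t + t2)" by (simp add: algebra_simps power2_eq_square)
  then have dB: "B dvd a - t^2" using assms(3) e2 by (metis dvd_diff dvd_mult2 dvd_triv_left)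
  show ?thesis using divides_mult[OF dA dB assms(1)] by blast
qed


lemma coprime_dvd_left:
  fixes q g a :: "real poly"
  assumes "q dvd g" "coprime g a"
  shows "coprime q a"
  using assms by (meson coprime_def dvd_trans)

lemma main_sqrt:
  fixes g a :: "real poly"
  assumes "g \<noteq> 0" "coprime g a" "\<forall>x::real. poly g x = 0 \<longrightarrow> poly a x > 0"
  shows "\<exists>t. g dvd a - t^2"
  using assms
proof (induction "degree g" arbitrary: g rule: less_induct)
  case (less g)
  show ?case
  proof (cases "is_unit g")
    case True
    then show ?thesis by auto
  next
    case False
    obtain q where q: "q dvd g" "prime q" using prime_divisor_exists[OF less.prems(1) False] by blast
    have "q \<noteq> 0" "\<not> is_unit q" using q(2) by auto
    define e where "e = multiplicity q g"
    obtain h where gh: "g = q ^ e * h" and nqh: "\<not> q dvd h"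
      using multiplicity_decompose'[OF less.prems(1) \<open>\<not> is_unit q\<close>] unfolding e_def by metis
    have "e > 0"
    proof (rule ccontr)
      assume "\<not> e > 0"
      then have "g = h" using gh by simp
      then show False using q(1) nqh by simp
    qed
    then obtain n where en: "e = Suc n" using gr0_conv_Suc by blast
    have cqh: "coprime (q ^ e) h" using prime_imp_power_coprime[OF q(2) nqh] by (simp add: ac_simps)
    have cqa: "coprime q a" using coprime_dvd_left[OF q(1) less.prems(2)] .
    obtain t0 where "q dvd a - t0^2" using base_sqrt[OF q(2) q(1) less.prems(3)] by blast
    then obtain t1 where t1: "q ^ e dvd a - t1^2" using hensel[OF cqa, of t0 n] en by blast
    have h0: "h \<noteq> 0" and qe0: "q ^ e \<noteq> 0" using gh less.prems(1) by auto
    have dq: "degree q > 0" using is_unit_iff_degree \<open>q \<noteq> 0\<close> \<open>\<not> is_unit q\<close> by blast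
    have "degree g = degree (q ^ e) + degree h" using gh h0 qe0 degree_mult_eq by blast
    moreover have "degree (q ^ e) = e * degree q" by (simp add: degree_power_eq \<open>q \<noteq> 0\<close>)
    ultimately have dlt: "degree h < degree g" using dq \<open>e > 0\<close> by simp
    have hdg: "h dvd g" using gh by simp
    have cha: "coprime h a" using coprime_dvd_left[OF hdg less.prems(2)] .
    have hroots: "\<forall>x::real. poly h x = 0 \<longrightarrow> poly a x > 0" using less.prems(3) gh by auto
    obtain t2 where t2: "h dvd a - t2^2" using less.hyps[OF dlt h0 cha hroots] by blast
    obtain t where "q ^ e * h dvd a - t^2" using crt_sqrt[OF cqh t1 t2] by blast
    then show ?thesis unfolding gh by blast
  qed
qed

theorem proposition3p8:
  fixes g a :: "real poly" and m :: nat
  assumes "coprime g a"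
    and "degree g = m"
    and "\<forall>x::real. poly g x = 0 \<longrightarrow> poly a x > 0"
  shows "\<exists>t :: real poly. degree t \<le> m \<and> (\<exists>w :: real poly. a = t ^ 2 + w * g)"
proof (cases "g = 0")
  case True
  then have "is_unit a" using assms(1) by simp
  then have "a \<noteq> 0" by auto
  then have "degree a = 0" using is_unit_iff_degree \<open>is_unit a\<close> by blast
  define c where "c = coeff a 0"
  have ac: "a = [:c:]" unfolding c_def using \<open>degree a = 0\<close> by (simp add: degree_0_id)
  have "poly a 0 > 0" using assms(3) True by simp
  then have "c > 0" using ac by simp
  define t where "t = [:sqrt c:]"
  have "a = t^2 + 0 * g" using \<open>c > 0\<close> ac unfolding t_def by (simp add: power2_eq_square)
  moreover have "degree t \<le> m" unfolding t_def by simp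
  ultimately show ?thesis by blast
next
  case False
  obtain t where tdvd: "g dvd a - t^2" using main_sqrt[OF False assms(1) assms(3)] by blast
  define r where "r = t mod g"
  have tr: "t - r = g * (t div g)" unfolding r_def by (simp add: minus_mod_eq_mult_div)
  have "t^2 - r^2 = (t - r) * (t + r)" by (simp add: algebra_simps power2_eq_square)
  also have "\<dots> = g * ((t div g) * (t + r))" unfolding tr by (simp add: ac_simps)
  finally have d2: "g dvd t^2 - r^2" by (rule dvdI)
  have "a - r^2 = (a - t^2) + (t^2 - r^2)" by simp
  moreover have "g dvd (a - t^2) + (t^2 - r^2)" using tdvd d2 by (rule dvd_add)
  ultimately have "g dvd a - r^2" by simp
  then obtain w where "a - r^2 = g * w" by (rule dvdE)
  then have "a = r^2 + w * g" by (simp add: algebra_simps)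
  moreover have "degree r \<le> m"
  proof (cases "r = 0")
    case True then show ?thesis by simp
  next
    case F: False
    have "degree r < degree g" using degree_mod_less'[OF False] F unfolding r_def by blast
    then show ?thesis using assms(2) by simp
  qed
  ultimately show ?thesis by blast
qed

end
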